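(* Let $A$ be a commutative unital ring of characteristic $0$, $n\ge4$, $k\in\{3,\ldots,n-1\}$ and $(b_1,\ldots,b_k)\in A^k$. Let $s=(1_A,n_A-2_A,1_A,2_A,\ldots,2_A)\in A^n$ (last $n-3$ entries equal to $2_A$). Suppose $(b_1,\ldots,b_k)$ can be used to reduce $s$, i.e. $(b_1,\ldots,b_k)$ is a $\lambda$-quiddity over $A$ and there exists $(c_1,\ldots,c_{n+2-k})\in A^{n+2-k}$ with $s\sim(c_1,\ldots,c_{n+2-k})\oplus(b_1,\ldots,b_k)$. Then there exist $x,y\in A$ such that $(b_1,\ldots,b_k)=(x,1_A,2_A,\ldots,2_A,y)$ or $(b_1,\ldots,b_k)=(x,2_A,\ldots,2_A,1_A,y)$ (the number of entries equal to $2_A$ being $k-3$, possibly zero).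
   Context: $k_A=k\cdot1_A$ for an integer $k$. For $a_1,\ldots,a_n\in A$, $M_n(a_1,\ldots,a_n)=\begin{pmatrix}a_n&-1\\1&0\end{pmatrix}\cdots\begin{pmatrix}a_1&-1\\1&0\end{pmatrix}$. An $n$-tuple $(a_1,\ldots,a_n)\in A^n$ is a $\lambda$-quiddity over $A$ if $M_n(a_1,\ldots,a_n)=\pm\mathrm{Id}$. For $(a_1,\ldots,a_n)\in A^n$, $(b_1,\ldots,b_m)\in A^m$, define $(a_1,\ldots,a_n)\oplus(b_1,\ldots,b_m)=(a_1+b_m,a_2,\ldots,a_{n-1},a_n+b_1,b_2,\ldots,b_{m-1})$. Write $(a_1,\ldots,a_n)\sim(b_1,\ldots,b_n)$ if $(b_1,\ldots,b_n)$ is obtained from $(a_1,\ldots,a_n)$ or from $(a_n,\ldots,a_1)$ by a cyclic permutation. *)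

theory Defs
  imports Main
begin

text \<open>2x2 matrices over a commutative ring, represented as quadruples (a,b,c,d)
  standing for the matrix with rows (a b) and (c d).\<close>
type_synonym 'a mat2 = "'a \<times> 'a \<times> 'a \<times> 'a"

fun mat2_mult :: "'a::comm_ring_1 mat2 \<Rightarrow> 'a mat2 \<Rightarrow> 'a mat2" where
  "mat2_mult (a, b, c, d) (e, f, g, h) =
     (a * e + b * g, a * f + b * h, c * e + d * g, c * f + d * h)"

definition mat2_id :: "'a::comm_ring_1 mat2" where
  "mat2_id = (1, 0, 0, 1)"

definition elem_mat :: "'a::comm_ring_1 \<Rightarrow> 'a mat2" where
  "elem_mat a = (a, -1, 1, 0)"

text \<open>M_n(a_1,...,a_n) = M(a_n) ... M(a_1): each new entry multiplies on the left.\<close>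
definition Mn :: "'a::comm_ring_1 list \<Rightarrow> 'a mat2" where
  "Mn as = foldl (\<lambda>M a. mat2_mult (elem_mat a) M) mat2_id as"

definition lambda_quiddity :: "'a::comm_ring_1 list \<Rightarrow> bool" where
  "lambda_quiddity as \<longleftrightarrow> Mn as = mat2_id \<or> Mn as = (-1, 0, 0, -1)"

text \<open>(a_1..a_n) \<oplus> (b_1..b_m) = (a_1+b_m, a_2, .., a_{n-1}, a_n+b_1, b_2, .., b_{m-1}).\<close>
definition qoplus :: "'a::comm_ring_1 list \<Rightarrow> 'a list \<Rightarrow> 'a list" where
  "qoplus as bs =
     [hd as + last bs] @ take (length as - 2) (tl as) @ [last as + hd bs]
     @ take (length bs - 2) (tl bs)"

definition qsim :: "'a list \<Rightarrow> 'a list \<Rightarrow> bool" where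
  "qsim as bs \<longleftrightarrow> (\<exists>r. bs = rotate r as \<or> bs = rotate r (rev as))"

end

theory Submission
  imports Defs
begin

lemma char0_of_int:
  assumes "CHAR('a::comm_ring_1) = 0" and "(of_int z :: 'a) = 0"
  shows "z = 0"
proof (rule ccontr)
  assume z: "z \<noteq> 0"
  have "(of_nat (nat \<bar>z\<bar>) :: 'a) = 0"
  proof (cases "z \<ge> 0")
    case True
    then have "z = int (nat z)" by simp
    then have "of_int z = (of_nat (nat z) :: 'a)" by (metis of_int_of_nat_eq)
    then show ?thesis using assms(2) True by simp
  next
    case False
    then have "-z = int (nat (-z))" by simp
    then have "of_int (-z) = (of_nat (nat (-z)) :: 'a)" by (metis of_int_of_nat_eq)
    then show ?thesis using assms(2) False by simp
  qed
  moreover have "nat \<bar>z\<bar> > 0" using z by simp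
  ultimately show False using assms(1) CHAR_eq0_iff by blast
qed

lemma char0_of_int_eq:
  assumes "CHAR('a::comm_ring_1) = 0" and "(of_int z :: 'a) = of_int w"
  shows "z = w"
  using char0_of_int[OF assms(1), of "z - w"] assms(2) by simp

lemma mat2_mult_assoc:
  "mat2_mult A (mat2_mult B C) = mat2_mult (mat2_mult A B) C"
  by (cases A; cases B; cases C) (simp add: algebra_simps)

lemma mat2_mult_id: "mat2_mult M mat2_id = M"
  by (cases M) (simp add: mat2_id_def)

lemma foldl_Mn:
  fixes xs :: "'a::comm_ring_1 list"
  shows "foldl (\<lambda>M a. mat2_mult (elem_mat a) M) M0 xs = mat2_mult (Mn xs) M0"
proof (induction xs arbitrary: M0 rule: rev_induct)
  case Nil
  have "Mn ([] :: 'a list) = mat2_id" unfolding Mn_def by simp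
  then have "mat2_mult (Mn ([] :: 'a list)) M0 = M0" by (simp only: mat2_id_def) (cases M0, simp)
  then show ?case by simp
next
  case (snoc x xs)
  have "Mn (xs @ [x]) = mat2_mult (elem_mat x) (foldl (\<lambda>M a. mat2_mult (elem_mat a) M) mat2_id xs)"
    unfolding Mn_def by simp
  also have "\<dots> = mat2_mult (elem_mat x) (Mn xs)"
    using snoc.IH[of mat2_id] by (simp only: mat2_mult_id)
  finally have e: "Mn (xs @ [x]) = mat2_mult (elem_mat x) (Mn xs)" .
  have "foldl (\<lambda>M a. mat2_mult (elem_mat a) M) M0 (xs @ [x])
      = mat2_mult (elem_mat x) (foldl (\<lambda>M a. mat2_mult (elem_mat a) M) M0 xs)" by simp
  also have "\<dots> = mat2_mult (elem_mat x) (mat2_mult (Mn xs) M0)" by (simp only: snoc.IH)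
  finally show ?case by (simp only: e mat2_mult_assoc)
qed

lemma Mn_append: "Mn (xs @ ys) = mat2_mult (Mn ys) (Mn xs)"
proof -
  have "Mn (xs @ ys) = foldl (\<lambda>M a. mat2_mult (elem_mat a) M) (Mn xs) ys"
    by (simp add: Mn_def)
  then show ?thesis by (simp only: foldl_Mn)
qed

lemma Mn_single: "Mn [a] = elem_mat a"
  by (simp add: Mn_def mat2_id_def elem_mat_def)

lemma Mn_Cons: "Mn (x # xs) = mat2_mult (Mn xs) (elem_mat x)"
proof -
  have "Mn ([x] @ xs) = mat2_mult (Mn xs) (Mn [x])" by (rule Mn_append)
  then show ?thesis by (simp only: Mn_single append_Cons append_Nil)
qed

lemma Mn_Nil: "Mn [] = mat2_id"
  by (simp add: Mn_def)

definition hom4 :: "int mat2 \<Rightarrow> 'a::comm_ring_1 mat2" where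
  "hom4 M = (case M of (a,b,c,d) \<Rightarrow> (of_int a, of_int b, of_int c, of_int d))"

lemma Mn_map_of_int: "Mn (map of_int w) = (hom4 (Mn w) :: 'a::comm_ring_1 mat2)"
proof (induction w rule: rev_induct)
  case Nil
  show ?case by (simp add: Mn_Nil mat2_id_def hom4_def)
next
  case (snoc x xs)
  obtain a b c d where e: "Mn xs = (a, b, c, d)" by (cases "Mn xs") auto
  have "Mn (map of_int (xs @ [x])) = mat2_mult (elem_mat (of_int x)) (Mn (map of_int xs) :: 'a mat2)"
    by (simp only: map_append list.map Mn_append Mn_single)
  also have "\<dots> = mat2_mult (elem_mat (of_int x)) (hom4 (Mn xs))" by (simp only: snoc.IH)
  also have "\<dots> = hom4 (Mn (xs @ [x]))"
    by (simp only: Mn_append Mn_single e) (simp add: hom4_def elem_mat_def)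
  finally show ?case .
qed

lemma Mn_rep2: "Mn (replicate m (2::int)) = (1 + int m, - int m, int m, 1 - int m)"
proof (induction m)
  case 0
  then show ?case by (simp add: Mn_def mat2_id_def)
next
  case (Suc m)
  have "Mn (replicate (Suc m) (2::int)) = mat2_mult (Mn (replicate m 2)) (elem_mat 2)"
    by (simp only: replicate_Suc Mn_Cons)
  then show ?case using Suc by (simp add: elem_mat_def algebra_simps)
qed

definition P :: "int list \<Rightarrow> int" where "P w = fst (Mn w)"

lemma P_rep: "P (replicate m 2) = 1 + int m"
  by (simp add: P_def Mn_rep2)

lemma P_rep1: "P (replicate a 2 @ [1, c]) = c - 1 - int a"
  by (simp add: P_def Mn_append Mn_rep2 Mn_Cons Mn_Nil mat2_id_def elem_mat_def algebra_simps)

lemma P_rep1c1: "P (replicate a 2 @ [1, c, 1] @ replicate b 2) = c - 2 - int a - int b"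
  by (simp add: P_def Mn_append Mn_rep2 Mn_Cons Mn_Nil mat2_id_def elem_mat_def algebra_simps)

lemma P_c: "P [c] = c"
  by (simp add: P_def Mn_single elem_mat_def)

lemma P_c1: "P ([c, 1] @ replicate b 2) = c - 1 - int b"
  by (simp add: P_def Mn_append Mn_rep2 Mn_Cons Mn_Nil mat2_id_def elem_mat_def algebra_simps)

lemma lemG:
  fixes a b L :: nat and c :: int
  assumes c: "c = int a + int b + 1" and L: "1 \<le> L" "L \<le> a + b"
    and p: "P (take L (replicate a 2 @ [1, c, 1] @ replicate b 2)) \<in> {1, -1}"
  shows "take L (replicate a 2 @ [1, c, 1] @ replicate b 2) = replicate (L - 1) 2 @ [1]"
proof -
  consider "L \<le> a" | "L = a + 1" | "L = a + 2" | e where "L = a + 3 + e"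
  proof -
    have "L \<le> a \<or> L = a + 1 \<or> L = a + 2 \<or> L = a + 3 + (L - a - 3)" by linarith
    then show ?thesis using that by blast
  qed
  then show ?thesis
  proof cases
    case 1
    then have "take L (replicate a 2 @ [1, c, 1] @ replicate b 2) = replicate L 2"
      by (simp add: min_def)
    then show ?thesis using p P_rep[of L] L by simp
  next
    case 2
    then show ?thesis by simp
  next
    case 3
    then have "take L (replicate a 2 @ [1, c, 1] @ replicate b 2) = replicate a 2 @ [1, c]"
      by simp
    then show ?thesis using p P_rep1[of a c] c L 3 by auto
  next
    case 4
    then have "take L (replicate a 2 @ [1, c, 1] @ replicate b 2) = replicate a 2 @ [1, c, 1] @ replicate e 2"
      using L by (simp add: min_def take_Cons')
    then show ?thesis using p P_rep1c1[of a c e] c L 4 by auto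
  qed
qed

lemma lemH1:
  fixes N L :: nat and c :: int
  assumes c: "c = int N + 1" and L: "1 \<le> L" "L \<le> N"
    and p: "P (take L ([c, 1] @ replicate N 2 @ [1])) \<in> {1, -1}"
  shows False
proof (cases "L = 1")
  case True
  then show ?thesis using p P_c[of c] c L by auto
next
  case False
  then have "L = (L - 2) + 2" using L by linarith
  then obtain e where e: "L = e + 2" by blast
  then have "take L ([c, 1] @ replicate N 2 @ [1]) = [c, 1] @ replicate e 2"
    using L by (simp add: min_def)
  then show ?thesis using p P_c1[of c e] c L e by auto
qed

lemma lemH2:
  fixes N L :: nat and c :: int
  assumes L: "1 \<le> L" "L \<le> N + 1"
  shows "take L ([1] @ replicate N 2 @ [1, c]) = 1 # replicate (L - 1) 2"
  using L by (cases L) (auto simp: min_def)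

lemma core:
  fixes N L R :: nat and c :: int and s' :: "int list"
  assumes c: "c = int N + 1" and L: "1 \<le> L" "L \<le> N"
    and s': "s' = [1, c, 1] @ replicate N 2 \<or> s' = rev ([1, c, 1] @ replicate N 2)"
    and p: "P (take L (rotate R s')) \<in> {1, -1}"
  shows "take L (rotate R s') = 1 # replicate (L - 1) 2 \<or> take L (rotate R s') = replicate (L - 1) 2 @ [1]"
proof -
  define r where "r = R mod (N + 3)"
  have len: "length s' = N + 3" using s' by auto
  have rot: "rotate R s' = drop r s' @ take r s'"
    using rotate_drop_take[of R s'] len r_def by simp
  have rlt: "r < N + 3" unfolding r_def by simp
  from s' show ?thesis
  proof
    assume sf: "s' = [1, c, 1] @ replicate N 2"
    consider "r = 0" | "r = 1" | "r = 2" | i where "r = 3 + i" "i \<le> N"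
    proof -
      have "r = 0 \<or> r = 1 \<or> r = 2 \<or> (r = 3 + (r - 3) \<and> r - 3 \<le> N)" using rlt by linarith
      then show ?thesis using that by blast
    qed
    then show ?thesis
    proof cases
      case 1
      then have eq: "rotate R s' = replicate 0 2 @ [1, c, 1] @ replicate N 2" using rot sf
        by (simp add: )
      have pX: "P (take L (replicate 0 2 @ [1, c, 1] @ replicate N 2)) \<in> {1, -1}"
        using p unfolding eq .
      have g: "take L (replicate 0 2 @ [1, c, 1] @ replicate N 2) = replicate (L - 1) 2 @ [1]"
        by (rule lemG[OF _ _ _ pX]) (use c L  in auto)
      show ?thesis unfolding eq g by simp
    next
      case 2
      then have eq: "rotate R s' = [c, 1] @ replicate N 2 @ [1]" using rot sf by simp
      have pX: "P (take L ([c, 1] @ replicate N 2 @ [1])) \<in> {1, -1}"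
        using p unfolding eq .
      show ?thesis using lemH1[OF c L pX] by blast
    next
      case 3
      then have eq: "rotate R s' = [1] @ replicate N 2 @ [1, c]" using rot sf by (simp add: numeral_2_eq_2)
      show ?thesis unfolding eq using lemH2[of L N c] L by simp
    next
      case 4
      have d3: "3 + i = Suc (Suc (Suc i))" by simp
      have "drop r s' = drop i (replicate N (2::int))" unfolding 4(1) sf d3 by simp
      also have "\<dots> = replicate (N - i) 2" by simp
      finally have dr: "drop r s' = replicate (N - i) 2" .
      have "take r s' = [1, c, 1] @ take i (replicate N (2::int))" unfolding 4(1) sf d3 by simp
      also have "\<dots> = [1, c, 1] @ replicate i 2" using 4(2) by (simp add: min_def)
      finally have tr: "take r s' = [1, c, 1] @ replicate i 2" .
      have eq: "rotate R s' = replicate (N - i) 2 @ [1, c, 1] @ replicate i 2"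
        unfolding rot dr tr by simp
      have pX: "P (take L (replicate (N - i) 2 @ [1, c, 1] @ replicate i 2)) \<in> {1, -1}"
        using p unfolding eq .
      have g: "take L (replicate (N - i) 2 @ [1, c, 1] @ replicate i 2) = replicate (L - 1) 2 @ [1]"
        by (rule lemG[OF _ _ _ pX]) (use c L 4 in auto)
      show ?thesis unfolding eq g by simp
    qed
  next
    assume sr: "s' = rev ([1, c, 1] @ replicate N 2)"
    then have sr': "s' = replicate N 2 @ [1, c, 1]" by simp
    consider "r \<le> N" | "r = N + 1" | "r = N + 2"
      using rlt by linarith
    then show ?thesis
    proof cases
      case 1
      then have eq: "rotate R s' = replicate (N - r) 2 @ [1, c, 1] @ replicate r 2" using rot sr'
        by (simp add: min_def)
      have pX: "P (take L (replicate (N - r) 2 @ [1, c, 1] @ replicate r 2)) \<in> {1, -1}"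
        using p unfolding eq .
      have g: "take L (replicate (N - r) 2 @ [1, c, 1] @ replicate r 2) = replicate (L - 1) 2 @ [1]"
        by (rule lemG[OF _ _ _ pX]) (use c L 1 in auto)
      show ?thesis unfolding eq g by simp
    next
      case 2
      then have eq: "rotate R s' = [c, 1] @ replicate N 2 @ [1]" using rot sr' by simp
      have pX: "P (take L ([c, 1] @ replicate N 2 @ [1])) \<in> {1, -1}"
        using p unfolding eq .
      show ?thesis using lemH1[OF c L pX] by blast
    next
      case 3
      then have eq: "rotate R s' = [1] @ replicate N 2 @ [1, c]" using rot sr' by (simp add: numeral_2_eq_2)
      show ?thesis unfolding eq using lemH2[of L N c] L by simp
    qed
  qed
qed

theorem lemma4p8:
  fixes bs :: "'a::comm_ring_1 list" and n k :: nat
  assumes char0: "CHAR('a) = 0"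
    and n: "n \<ge> 4"
    and k: "3 \<le> k" "k \<le> n - 1"
    and blen: "length bs = k"
    and bq: "lambda_quiddity bs"
    and red: "\<exists>cs. length cs = n + 2 - k \<and>
               qsim ([1, of_nat n - 2, 1] @ replicate (n - 3) 2) (qoplus cs bs)"
  shows "\<exists>x y :: 'a. bs = [x, 1] @ replicate (k - 3) 2 @ [y]
                  \<or> bs = [x] @ replicate (k - 3) 2 @ [1, y]"
proof -
  define N where "N = n - 3"
  define L where "L = k - 2"
  define c :: int where "c = int N + 1"
  define sI :: "int list" where "sI = [1, c, 1] @ replicate N 2"
  have nN: "n = N + 3" using n N_def by simp
  have LN: "1 \<le> L" "L \<le> N" using k n unfolding L_def N_def by auto
  have sA: "[1, of_nat n - 2, 1] @ replicate (n - 3) 2 = (map of_int sI :: 'a list)"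
    by (simp add: sI_def c_def nN N_def[symmetric] algebra_simps)
  obtain cs where cs: "length cs = n + 2 - k"
    and q: "qsim (map of_int sI :: 'a list) (qoplus cs bs)" using red sA by auto
  have bne: "bs \<noteq> []" "tl bs \<noteq> []" proof -
    have h: "length (tl bs) \<ge> 2" using blen k by simp
    show "bs \<noteq> []" using blen k by auto
    show "tl bs \<noteq> []" using h by (cases "tl bs") auto
  qed
  define x where "x = hd bs"
  define mid where "mid = butlast (tl bs)"
  define y where "y = last (tl bs)"
  have bs: "bs = x # mid @ [y]" unfolding x_def mid_def y_def using bne by simp
  have lmid: "length mid = L" using bs blen L_def by simp
  define pre where "pre = [hd cs + last bs] @ take (length cs - 2) (tl cs) @ [last cs + hd bs]"
  have lpre: "length pre = length cs" using cs k unfolding pre_def by auto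
  have qo: "qoplus cs bs = pre @ mid"
    unfolding qoplus_def pre_def using bs lmid blen L_def by simp
  obtain r where "qoplus cs bs = rotate r (map of_int sI) \<or> qoplus cs bs = rotate r (rev (map of_int sI))"
    using q unfolding qsim_def by blast
  then obtain s' where s': "s' = sI \<or> s' = rev sI" and rr: "qoplus cs bs = rotate r (map of_int s')"
    unfolding rev_map by blast
  have midpre: "mid @ pre = rotate (length pre + r) (map of_int s')"
  proof -
    have "mid @ pre = rotate (length pre) (pre @ mid)" by (simp only: rotate_append)
    also have "\<dots> = rotate (length pre) (rotate r (map of_int s'))" using rr qo by simp
    also have "\<dots> = rotate (length pre + r) (map of_int s')" by (simp only: rotate_rotate)
    finally show ?thesis .
  qed
  then have midw: "mid = map of_int (take L (rotate (length pre + r) s'))"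
  proof -
    have "mid = take L (mid @ pre)" using lmid by simp
    also have "\<dots> = take L (map of_int (rotate (length pre + r) s'))" unfolding midpre rotate_map ..
    finally show ?thesis by (simp only: take_map)
  qed
  define w where "w = take L (rotate (length pre + r) s')"
  obtain p1 p2 p3 p4 where Mw: "Mn w = (p1, p2, p3, p4)" by (cases "Mn w") auto
  have "snd (snd (snd (Mn bs))) = - of_int p1"
    using bs midw Mw unfolding w_def[symmetric]
    by (simp add: Mn_Cons Mn_append Mn_single Mn_Nil mat2_id_def Mn_map_of_int hom4_def elem_mat_def)
  then have "(of_int (- p1) :: 'a) = of_int 1 \<or> (of_int (- p1) :: 'a) = of_int (-1)"
    using bq unfolding lambda_quiddity_def mat2_id_def by auto
  then have "P w \<in> {1, -1}" using char0_of_int_eq[OF char0] Mw P_def by fastforce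
  then have "w = 1 # replicate (L - 1) 2 \<or> w = replicate (L - 1) 2 @ [1]"
    using core[of c N L s' "length pre + r"] c_def LN s' sI_def w_def by auto
  then have "mid = [1] @ replicate (k - 3) 2 \<or> mid = replicate (k - 3) 2 @ [1]"
    using midw w_def L_def by auto
  then show ?thesis using bs by auto
qed

end
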